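(* Let $k\geq 2$, let $A$ and $B$ be $d\times d$ matrices with entries in $\mathbb{Z}[1/2,\zeta_{2^{k-1}}]$, and assume that $A+B\zeta_{2^k}$ is unitary. Then the $2d\times 2d$ matrix $A\otimes I_2+B\otimes\Lambda_k$ is unitary (and has entries in $\mathbb{Z}[1/2,\zeta_{2^{k-1}}]$).
   Context: $\zeta_n=e^{2\pi i/n}$; $\mathbb{Z}[1/2,\zeta_n]$ is the smallest subring of $\mathbb{C}$ containing $1/2$ and $\zeta_n$. $\Lambda_k=\begin{bmatrix}0&1\\ \zeta_{2^{k-1}}&0\end{bmatrix}$. *)

theory Defs
  imports Complex_Main "Jordan_Normal_Form.Matrix"
begin

definition zeta :: "nat \<Rightarrow> complex" where
  "zeta n = exp (2 * of_real pi * \<i> / of_nat n)"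

inductive_set Zhalf_zeta :: "nat \<Rightarrow> complex set" for n :: nat where
  one: "1 \<in> Zhalf_zeta n"
| half: "1/2 \<in> Zhalf_zeta n"
| root: "zeta n \<in> Zhalf_zeta n"
| add: "x \<in> Zhalf_zeta n \<Longrightarrow> y \<in> Zhalf_zeta n \<Longrightarrow> x + y \<in> Zhalf_zeta n"
| neg: "x \<in> Zhalf_zeta n \<Longrightarrow> - x \<in> Zhalf_zeta n"
| mult: "x \<in> Zhalf_zeta n \<Longrightarrow> y \<in> Zhalf_zeta n \<Longrightarrow> x * y \<in> Zhalf_zeta n"

definition entries_in :: "'a mat \<Rightarrow> 'a set \<Rightarrow> bool" where
  "entries_in M S \<longleftrightarrow> (\<forall>i < dim_row M. \<forall>j < dim_col M. M $$ (i, j) \<in> S)"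

definition adjoint_mat :: "complex mat \<Rightarrow> complex mat" where
  "adjoint_mat M = map_mat cnj (transpose_mat M)"

definition unitary_mat :: "complex mat \<Rightarrow> bool" where
  "unitary_mat U \<longleftrightarrow> (\<exists>n. U \<in> carrier_mat n n \<and>
      adjoint_mat U * U = 1\<^sub>m n \<and> U * adjoint_mat U = 1\<^sub>m n)"

definition kron :: "'a::times mat \<Rightarrow> 'a mat \<Rightarrow> 'a mat" where
  "kron A B = mat (dim_row A * dim_row B) (dim_col A * dim_col B)
     (\<lambda>(i, j). A $$ (i div dim_row B, j div dim_col B) * B $$ (i mod dim_row B, j mod dim_col B))"

definition Lambda :: "nat \<Rightarrow> complex mat" where
  "Lambda k = mat 2 2 (\<lambda>(i, j). if i = 0 \<and> j = 1 then 1
                               else if i = 1 \<and> j = 0 then zeta (2 ^ (k - 1)) else 0)"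

end

theory Submission
  imports Defs "HOL-Computational_Algebra.Primes" "Jordan_Normal_Form.Determinant"
begin

lemma sqrt2_irr: "sqrt 2 \<notin> \<rat>"
proof
  let ?p = "2::nat"
  have pr: "prime ?p" by simp
  from pr have p: "?p > 1" by (rule prime_gt_1_nat)
  assume "sqrt 2 \<in> \<rat>"
  then have "sqrt (real ?p) \<in> \<rat>" by simp
  then obtain m n :: nat
    where n: "n \<noteq> 0"
      and sqrt_rat: "\<bar>sqrt ?p\<bar> = m / n"
      and "coprime m n" by (rule Rats_abs_nat_div_natE)
  have eq: "m\<^sup>2 = ?p * n\<^sup>2"
  proof -
    from n and sqrt_rat have "m = \<bar>sqrt ?p\<bar> * n" by simp
    then have "m\<^sup>2 = (sqrt ?p)\<^sup>2 * n\<^sup>2" by (simp add: power_mult_distrib)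
    also have "(sqrt ?p)\<^sup>2 = ?p" by simp
    also have "\<dots> * n\<^sup>2 = ?p * n\<^sup>2" by simp
    finally show ?thesis by linarith
  qed
  have "?p dvd m \<and> ?p dvd n"
  proof
    from eq have "?p dvd m\<^sup>2" ..
    with pr show "?p dvd m" by (rule prime_dvd_power)
    then obtain k where "m = ?p * k" ..
    with eq have "?p * n\<^sup>2 = ?p\<^sup>2 * k\<^sup>2" by (simp add: power_mult_distrib)
    with p have "n\<^sup>2 = ?p * k\<^sup>2" by (simp add: power2_eq_square)
    then have "?p dvd n\<^sup>2" ..
    with pr show "?p dvd n" by (rule prime_dvd_power)
  qed
  then have "?p dvd gcd m n" by simp
  with \<open>coprime m n\<close> have "?p = 1" by simp
  with p show False by simp
qed

lemma no_rat_half: "b \<in> (\<rat>::complex set) \<Longrightarrow> (2 * b * b) * (2 * b * b) \<noteq> 1"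
proof
  assume b: "b \<in> \<rat>" and e0: "(2 * b * b) * (2 * b * b) = 1"
  from b obtain q where q: "b = of_rat q" by (auto simp: Rats_def)
  define r :: real where "r = of_rat q"
  have br: "b = of_real r" by (simp add: q r_def of_rat_def)
  from e0 have "complex_of_real ((2 * r * r)^2) = 1" by (simp add: br power2_eq_square)
  then have "(2 * r * r)^2 = 1" using of_real_eq_1_iff by blast
  then have "2 * r * r = 1 \<or> 2 * r * r = -1" by (simp add: power2_eq_1_iff)
  moreover have "2 * r * r \<ge> 0" by simp
  ultimately have e2: "2 * r * r = 1" by linarith
  have "(2 * \<bar>r\<bar>)^2 = 2" using e2 by (simp add: power2_eq_square abs_mult_self_eq)
  then have "sqrt 2 = 2 * \<bar>r\<bar>" by (metis abs_ge_zero mult_nonneg_nonneg real_sqrt_unique zero_le_numeral)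
  moreover have "2 * \<bar>r\<bar> \<in> \<rat>" by (simp add: r_def)
  ultimately show False using sqrt2_irr by simp
qed

lemma zeta_sq: "zeta (2 ^ Suc m) ^ 2 = zeta (2 ^ m)"
proof -
  have "zeta (2 ^ Suc m) ^ 2 = exp (2 * (2 * of_real pi * \<i> / of_nat (2 ^ Suc m)))"
    unfolding zeta_def by (simp only: exp_of_nat_mult[symmetric] of_nat_numeral)
  also have "2 * (2 * of_real pi * \<i> / of_nat (2 ^ Suc m)) = 2 * of_real pi * \<i> / (of_nat (2 ^ m) :: complex)"
    by simp
  finally show ?thesis unfolding zeta_def .
qed

lemma zeta_1: "zeta 1 = 1" "zeta (Suc 0) = 1" by (simp_all add: zeta_def)
lemma zeta_2: "zeta 2 = -1" by (simp add: zeta_def)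
lemma zeta_4: "zeta 4 = \<i>"
proof -
  have "zeta 4 = exp (\<i> * of_real (pi/2))" unfolding zeta_def by (simp add: of_real_divide)
  also have "\<dots> = \<i>" using cis_conv_exp[of "pi/2"] by simp
  finally show ?thesis .
qed

lemma zeta_norm: "norm (zeta n) = 1"
  unfolding zeta_def by (simp add: norm_exp_eq_Re)

lemma zeta_cnj: "cnj (zeta n) * zeta n = 1"
proof -
  have "zeta n * cnj (zeta n) = of_real ((norm (zeta n))^2)" by (rule complex_norm_square[symmetric])
  then show ?thesis by (simp add: zeta_norm mult.commute)
qed

fun Qf :: "nat \<Rightarrow> complex set" where
  "Qf 0 = \<rat>"
| "Qf (Suc m) = {a + b * zeta (2 ^ Suc m) | a b. a \<in> Qf m \<and> b \<in> Qf m}"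

lemma Qf_ring: "(\<rat> \<subseteq> Qf m) \<and> zeta (2^m) \<in> Qf m \<and>
  (\<forall>x\<in>Qf m. \<forall>y\<in>Qf m. x + y \<in> Qf m \<and> - x \<in> Qf m \<and> x * y \<in> Qf m)"
proof (induction m)
  case 0
  then show ?case by (auto simp: zeta_1)
next
  case (Suc m)
  let ?s = "zeta (2 ^ Suc m)" and ?e = "zeta (2^m)"
  have ss: "?s * ?s = ?e" using zeta_sq[of m] by (simp add: power2_eq_square)
  have 1: "\<rat> \<subseteq> Qf (Suc m)"
  proof
    fix x :: complex assume "x \<in> \<rat>"
    then have "x = x + 0 * ?s \<and> x \<in> Qf m \<and> (0::complex) \<in> Qf m" using Suc by auto
    then show "x \<in> Qf (Suc m)" by (simp only: Qf.simps) blast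
  qed
  have 2: "?s \<in> Qf (Suc m)"
  proof -
    have "?s = 0 + 1 * ?s \<and> (0::complex) \<in> Qf m \<and> (1::complex) \<in> Qf m" using Suc by auto
    then show ?thesis by (simp only: Qf.simps) blast
  qed
  have 3: "x + y \<in> Qf (Suc m) \<and> - x \<in> Qf (Suc m) \<and> x * y \<in> Qf (Suc m)"
    if "x \<in> Qf (Suc m)" "y \<in> Qf (Suc m)" for x y
  proof -
    from that obtain a b c d where x: "x = a + b * ?s" and y: "y = c + d * ?s"
      and ab: "a \<in> Qf m" "b \<in> Qf m" "c \<in> Qf m" "d \<in> Qf m" by auto
    have "x + y = (a + c) + (b + d) * ?s" by (simp add: x y algebra_simps)
    moreover have "-x = (-a) + (-b) * ?s" by (simp add: x)
    moreover have "x * y = (a * c + (b * d) * ?e) + (a * d + b * c) * ?s"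
      by (simp add: x y algebra_simps ss[symmetric])
    moreover have "a + c \<in> Qf m" "b + d \<in> Qf m" "-a \<in> Qf m" "-b \<in> Qf m"
      "a * c + (b * d) * ?e \<in> Qf m" "a * d + b * c \<in> Qf m"
      using Suc ab by auto
    ultimately show ?thesis by (simp only: Qf.simps) blast
  qed
  show ?case using 1 2 3 by blast
qed



lemma Qf_Suc_iff: "x \<in> Qf (Suc m) \<longleftrightarrow> (\<exists>a b. x = a + b * zeta (2 ^ Suc m) \<and> a \<in> Qf m \<and> b \<in> Qf m)"
  by (simp only: Qf.simps) blast

declare Qf.simps(2)[simp del]

lemma Qf_rat: "x \<in> \<rat> \<Longrightarrow> x \<in> Qf m" using Qf_ring by blast
lemma Qf_zeta: "zeta (2^m) \<in> Qf m" using Qf_ring by blast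
lemma Qf_add: "x \<in> Qf m \<Longrightarrow> y \<in> Qf m \<Longrightarrow> x + y \<in> Qf m" using Qf_ring by blast
lemma Qf_neg: "x \<in> Qf m \<Longrightarrow> - x \<in> Qf m" using Qf_ring by blast
lemma Qf_mult: "x \<in> Qf m \<Longrightarrow> y \<in> Qf m \<Longrightarrow> x * y \<in> Qf m" using Qf_ring by blast
lemma Qf_diff: "x \<in> Qf m \<Longrightarrow> y \<in> Qf m \<Longrightarrow> x - y \<in> Qf m"
  using Qf_add[of x m "-y"] Qf_neg[of y m] by simp
lemma Qf_0: "0 \<in> Qf m" and Qf_1: "1 \<in> Qf m" by (auto intro: Qf_rat)

lemma Qf_mono: "Qf m \<subseteq> Qf (Suc m)"
proof
  fix x assume "x \<in> Qf m"
  then have "x = x + 0 * zeta (2 ^ Suc m) \<and> x \<in> Qf m \<and> (0::complex) \<in> Qf m" using Qf_0 by auto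
  then show "x \<in> Qf (Suc m)" unfolding Qf_Suc_iff by blast
qed

lemma Qf_mono': "m \<le> n \<Longrightarrow> Qf m \<subseteq> Qf n"
proof (induction n rule: dec_induct)
  case base then show ?case by simp
next
  case (step n) then show ?case using Qf_mono[of n] by blast
qed

lemma Qf_1_eq: "Qf 1 = \<rat>"
proof
  show "Qf 1 \<subseteq> \<rat>"
  proof
    fix x assume "x \<in> Qf 1"
    then obtain a b where "x = a + b * zeta 2" "a \<in> \<rat>" "b \<in> \<rat>"
      by (auto simp: Qf_Suc_iff)
    then show "x \<in> \<rat>" by (simp add: zeta_2)
  qed
  show "\<rat> \<subseteq> Qf 1" using Qf_rat by blast
qed

lemma i_Qf: "m \<ge> 2 \<Longrightarrow> \<i> \<in> Qf m"
  using Qf_mono'[of 2 m] Qf_zeta[of 2] zeta_4 by auto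

lemma Qf_field_notin:
  assumes "m \<ge> 1"
  shows "(\<forall>x\<in>Qf m. inverse x \<in> Qf m) \<and> zeta (2 ^ Suc m) \<notin> Qf m"
  using assms
proof (induction m rule: dec_induct)
  case base
  have "\<i> \<notin> (\<rat>::complex set)"
  proof
    assume "\<i> \<in> (\<rat>::complex set)"
    then obtain q where q: "\<i> = of_rat q" by (auto simp: Rats_def)
    have "(of_rat q :: complex) = of_real (of_rat q)" by (simp add: of_rat_def)
    then have "Im \<i> = Im (of_real (of_rat q))" using q by simp
    then show False by simp
  qed
  moreover have "\<forall>x\<in>\<rat>. inverse x \<in> (\<rat>::complex set)" by auto
  moreover have "Qf (Suc 0) = \<rat>" using Qf_1_eq by simp
  ultimately show ?case using zeta_4 by simp
next
  case (step m)
  let ?s = "zeta (2 ^ Suc m)" and ?e = "zeta (2^m)"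
  have ss: "?s * ?s = ?e" using zeta_sq[of m] by (simp add: power2_eq_square)
  have F: "\<And>x. x \<in> Qf m \<Longrightarrow> inverse x \<in> Qf m" and N: "?s \<notin> Qf m" using step by auto
  have uniq: "a = 0 \<and> b = 0" if "a \<in> Qf m" "b \<in> Qf m" "a + b * ?s = 0" for a b
  proof (cases "b = 0")
    case True then show ?thesis using that by simp
  next
    case False
    then have "?s = (- a) * inverse b" using that(3) by (simp add: field_simps add_eq_0_iff)
    moreover have "(- a) * inverse b \<in> Qf m" by (intro Qf_mult Qf_neg F that)
    ultimately show ?thesis using N by simp
  qed
  have F2: "inverse x \<in> Qf (Suc m)" if "x \<in> Qf (Suc m)" for x
  proof (cases "x = 0")
    case True then show ?thesis using Qf_0 by simp
  next
    case False
    from that obtain a b where x: "x = a + b * ?s" and ab: "a \<in> Qf m" "b \<in> Qf m" by (auto simp: Qf_Suc_iff)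
    have nb: "a - b * ?s \<noteq> 0"
    proof
      assume "a - b * ?s = 0"
      then have "a + (-b) * ?s = 0" by simp
      then have "a = 0 \<and> -b = 0" using uniq ab Qf_neg by blast
      then show False using False x by simp
    qed
    define d where "d = a * a - b * b * ?e"
    have dd: "d = x * (a - b * ?s)" by (simp add: d_def x algebra_simps ss[symmetric])
    have d0: "d \<noteq> 0" using dd nb False by simp
    have dQ: "d \<in> Qf m" unfolding d_def by (intro Qf_mult Qf_diff ab Qf_zeta)
    have "inverse x = (a - b * ?s) / d" using dd d0 False by (simp add: field_simps)
    also have "\<dots> = a * inverse d + (- b * inverse d) * ?s" by (simp add: divide_inverse algebra_simps)
    finally have "inverse x = a * inverse d + (- b * inverse d) * ?s" .
    moreover have "a * inverse d \<in> Qf m" "- b * inverse d \<in> Qf m"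
      by (intro Qf_mult Qf_neg F ab dQ)+
    ultimately show ?thesis unfolding Qf_Suc_iff by blast
  qed
  have N2: "zeta (2 ^ Suc (Suc m)) \<notin> Qf (Suc m)"
  proof
    let ?t = "zeta (2 ^ Suc (Suc m))"
    assume "?t \<in> Qf (Suc m)"
    then obtain a b where t: "?t = a + b * ?s" and ab: "a \<in> Qf m" "b \<in> Qf m" by (auto simp: Qf_Suc_iff)
    have tt: "?t * ?t = ?s" using zeta_sq[of "Suc m"] by (simp add: power2_eq_square)
    have "(a*a + b*b*?e) + (2*a*b - 1) * ?s = 0"
    proof -
      have e: "(a + b*?s)*(a+b*?s) = ?s" using tt unfolding t .
      show ?thesis using e by (simp add: algebra_simps ss[symmetric])
    qed
    moreover have "a*a + b*b*?e \<in> Qf m" "2*a*b - 1 \<in> Qf m"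
      by (intro Qf_mult Qf_add Qf_diff ab Qf_zeta Qf_1 Qf_rat; simp)+
    ultimately have e1: "a*a + b*b*?e = 0" and e2': "2*a*b - 1 = 0" using uniq by blast+
    from e2' have e2: "2*a*b = 1" by simp
    define c where "c = 2 * b * b"
    have cQ: "c \<in> Qf m" unfolding c_def by (intro Qf_mult ab Qf_rat; simp)
    have "c * c * ?e = 4 * b * b * (b * b * ?e)" by (simp add: c_def algebra_simps)
    also have "b * b * ?e = - (a * a)" using e1 by (simp add: add_eq_0_iff)
    also have "4 * b * b * (- (a * a)) = - ((2*a*b) * (2*a*b))" by (simp add: algebra_simps)
    finally have cc: "c * c * ?e = -1" using e2 by simp
    show False
    proof (cases "m = 1")
      case True
      then have "b \<in> \<rat>" using ab Qf_1_eq by simp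
      moreover have "(2 * b * b) * (2 * b * b) = 1" using cc True by (simp add: zeta_2 c_def)
      ultimately show False using no_rat_half by blast
    next
      case False
      then have m2: "m \<ge> 2" using step by simp
      have "(c * ?s) * (c * ?s) = -1" using cc ss by (simp add: algebra_simps)
      then have "(c * ?s - \<i>) * (c * ?s + \<i>) = 0" by (simp add: algebra_simps)
      then have "c * ?s = \<i> \<or> c * ?s = - \<i>" by (simp add: eq_neg_iff_add_eq_0)
      moreover have c0: "c \<noteq> 0" using cc by auto
      ultimately have "?s = \<i> * inverse c \<or> ?s = - \<i> * inverse c" by (auto simp: field_simps)
      moreover have "\<i> * inverse c \<in> Qf m" "- \<i> * inverse c \<in> Qf m"
        by (intro Qf_mult Qf_neg i_Qf[OF m2] F cQ)+
      ultimately show False using N by auto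
    qed
  qed
  show ?case using F2 N2 by blast
qed


lemma Zh_Qf: "x \<in> Zhalf_zeta (2^m) \<Longrightarrow> x \<in> Qf m"
proof (induction rule: Zhalf_zeta.induct)
  case one then show ?case by (rule Qf_1)
next
  case half then show ?case by (intro Qf_rat) simp
next
  case root then show ?case by (rule Qf_zeta)
next
  case (add x y) then show ?case by (blast intro: Qf_add)
next
  case (neg x) then show ?case by (blast intro: Qf_neg)
next
  case (mult x y) then show ?case by (blast intro: Qf_mult)
qed

lemma Qf_cnj: "x \<in> Qf m \<Longrightarrow> cnj x \<in> Qf m"
proof (induction m arbitrary: x)
  case 0
  then obtain q where q: "x = of_rat q" by (auto simp: Rats_def)
  have "(of_rat q :: complex) = of_real (of_rat q)" by (simp add: of_rat_def)
  then have "cnj x = x" using q by simp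
  then show ?case using 0 by simp
next
  case (Suc m)
  let ?s = "zeta (2 ^ Suc m)"
  from Suc.prems obtain a b where x: "x = a + b * ?s" and ab: "a \<in> Qf m" "b \<in> Qf m"
    by (auto simp: Qf_Suc_iff)
  have s0: "?s \<noteq> 0" using zeta_cnj[of "2 ^ Suc m"] by auto
  have cs: "cnj ?s = inverse ?s" using zeta_cnj[of "2 ^ Suc m"] s0 by (simp add: field_simps)
  have "inverse ?s \<in> Qf (Suc m)"
    using Qf_field_notin[of "Suc m"] Qf_zeta[of "Suc m"] by auto
  moreover have "cnj a \<in> Qf (Suc m)" "cnj b \<in> Qf (Suc m)" using Suc.IH ab Qf_mono by auto
  ultimately have "cnj a + cnj b * inverse ?s \<in> Qf (Suc m)" by (intro Qf_add Qf_mult)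
  moreover have "cnj x = cnj a + cnj b * inverse ?s" unfolding x cs[symmetric] by simp
  ultimately show ?case by simp
qed

lemma sum_Qf:
  assumes "finite S" "\<And>x. x \<in> S \<Longrightarrow> f x \<in> Qf m"
  shows "sum f S \<in> Qf m"
  using assms by (induction S rule: finite_induct) (auto intro: Qf_add Qf_0)

lemma sum2: "(\<Sum>t\<in>{0..<2*n}. f t) = (\<Sum>l\<in>{0..<n}. f (2*l) + f (2*l+1))"
  for n :: nat and f :: "nat \<Rightarrow> 'a::comm_monoid_add"
  by (induction n) (auto simp: sum.distrib add_ac)

lemma adj_mult_index:
  assumes "X \<in> carrier_mat n n" "Y \<in> carrier_mat n n" "i < n" "j < n"
  shows "(adjoint_mat X * Y) $$ (i,j) = (\<Sum>l\<in>{0..<n}. cnj (X $$ (l,i)) * Y $$ (l,j))"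
  using assms by (auto simp: adjoint_mat_def scalar_prod_def intro!: sum.cong)

theorem lemma2:
  fixes k d :: nat and A B :: "complex mat"
  assumes "k \<ge> 2"
    and "A \<in> carrier_mat d d" and "B \<in> carrier_mat d d"
    and "entries_in A (Zhalf_zeta (2 ^ (k - 1)))"
    and "entries_in B (Zhalf_zeta (2 ^ (k - 1)))"
    and "unitary_mat (A + zeta (2 ^ k) \<cdot>\<^sub>m B)"
  shows "unitary_mat (kron A (1\<^sub>m 2) + kron B (Lambda k))
       \<and> entries_in (kron A (1\<^sub>m 2) + kron B (Lambda k)) (Zhalf_zeta (2 ^ (k - 1)))"
proof -
  define N where "N = k - 1"
  have N1: "N \<ge> 1" and kN: "k = Suc N" using assms(1) by (auto simp: N_def)
  define z where "z = zeta (2^k)"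
  define w where "w = zeta (2^N)"
  have zz: "z * z = w" using zeta_sq[of N] kN by (simp add: power2_eq_square z_def w_def)
  have FN: "\<And>x. x \<in> Qf N \<Longrightarrow> inverse x \<in> Qf N" and notin: "z \<notin> Qf N"
    using Qf_field_notin[OF N1] kN z_def by auto
  have uniq: "p = 0 \<and> q = 0" if "p \<in> Qf N" "q \<in> Qf N" "p + q * z = 0" for p q
  proof (cases "q = 0")
    case True then show ?thesis using that by simp
  next
    case False
    then have "z = (- p) * inverse q" using that(3) by (simp add: field_simps add_eq_0_iff)
    moreover have "(- p) * inverse q \<in> Qf N" by (intro Qf_mult Qf_neg FN that)
    ultimately show ?thesis using notin by simp
  qed
  have wc: "cnj w * w = 1" unfolding w_def by (rule zeta_cnj)
  have wc': "w * cnj w = 1" using wc by (simp add: mult.commute)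
  have zc1: "cnj z * z = 1" unfolding z_def by (rule zeta_cnj)
  have zc: "cnj z = z * cnj w"
  proof -
    have "z * cnj w = z * (cnj z * cnj z)" by (simp add: zz[symmetric])
    also have "\<dots> = (cnj z * z) * cnj z" by (simp add: algebra_simps)
    finally show ?thesis using zc1 by simp
  qed
  have wQ: "w \<in> Qf N" "cnj w \<in> Qf N" unfolding w_def using Qf_zeta Qf_cnj by auto
  have Aq: "A $$ (i,j) \<in> Qf N" if "i < d" "j < d" for i j
    using assms(2,4) that Zh_Qf unfolding entries_in_def N_def by auto
  have Bq: "B $$ (i,j) \<in> Qf N" if "i < d" "j < d" for i j
    using assms(3,5) that Zh_Qf unfolding entries_in_def N_def by auto
  define U where "U = A + z \<cdot>\<^sub>m B"
  have Uc: "U \<in> carrier_mat d d" using assms(2,3) by (simp add: U_def)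
  from assms(6) obtain n where Un: "U \<in> carrier_mat n n" and UU: "adjoint_mat U * U = 1\<^sub>m n"
    unfolding unitary_mat_def U_def z_def by blast
  have nd: "n = d" using Un Uc by auto
  define P where "P i j = (\<Sum>l\<in>{0..<d}. cnj (A$$(l,i)) * A$$(l,j) + cnj (B$$(l,i)) * B$$(l,j))" for i j
  define Q where "Q i j = (\<Sum>l\<in>{0..<d}. cnj (A$$(l,i)) * B$$(l,j) + cnj w * (cnj (B$$(l,i)) * A$$(l,j)))" for i j
  have trm: "cnj (a + z * b) * (c + z * e) = (cnj a * c + cnj b * e) + z * (cnj a * e + cnj w * (cnj b * c))"
    for a b c e
  proof -
    have "cnj (a + z * b) * (c + z * e) = cnj a * c + cnj z * cnj b * c + z * cnj a * e + (cnj z * z) * cnj b * e"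
      by (simp add: algebra_simps)
    then show ?thesis using zc1 zc by (simp add: algebra_simps)
  qed
  have PQ: "P i j = (if i = j then 1 else 0) \<and> Q i j = 0" if ij: "i < d" "j < d" for i j
  proof -
    have "(if i = j then 1 else 0) = (adjoint_mat U * U) $$ (i,j)" using UU nd ij by simp
    also have "\<dots> = (\<Sum>l\<in>{0..<d}. cnj (U $$ (l,i)) * U $$ (l,j))" by (rule adj_mult_index[OF Uc Uc ij])
    also have "\<dots> = (\<Sum>l\<in>{0..<d}. (cnj (A$$(l,i)) * A$$(l,j) + cnj (B$$(l,i)) * B$$(l,j))
          + z * (cnj (A$$(l,i)) * B$$(l,j) + cnj w * (cnj (B$$(l,i)) * A$$(l,j))))"
    proof (intro sum.cong refl)
      fix l assume "l \<in> {0..<d}"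
      then have Ue: "U $$ (l,i) = A$$(l,i) + z * B$$(l,i)" "U $$ (l,j) = A$$(l,j) + z * B$$(l,j)"
        using assms(2,3) ij by (auto simp: U_def)
      show "cnj (U $$ (l,i)) * U $$ (l,j) = (cnj (A$$(l,i)) * A$$(l,j) + cnj (B$$(l,i)) * B$$(l,j))
          + z * (cnj (A$$(l,i)) * B$$(l,j) + cnj w * (cnj (B$$(l,i)) * A$$(l,j)))"
        unfolding Ue by (rule trm)
    qed
    also have "\<dots> = P i j + z * Q i j" by (simp add: P_def Q_def sum.distrib sum_distrib_left distrib_left)
    finally have e: "(P i j - (if i = j then 1 else 0)) + Q i j * z = 0" by (simp add: algebra_simps)
    have "P i j \<in> Qf N" unfolding P_def
      by (intro sum_Qf) (auto intro!: Qf_add Qf_mult Qf_cnj Aq Bq ij)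
    then have "P i j - (if i = j then 1 else 0) \<in> Qf N" by (auto intro: Qf_diff Qf_0 Qf_1)
    moreover have "Q i j \<in> Qf N" unfolding Q_def
      by (intro sum_Qf) (auto intro!: Qf_add Qf_mult Qf_cnj Aq Bq ij wQ)
    ultimately have "P i j - (if i = j then 1 else 0) = 0 \<and> Q i j = 0" using uniq e by blast
    then show ?thesis by simp
  qed
  define M where "M = kron A (1\<^sub>m 2) + kron B (Lambda k)"
  have dims: "dim_row (Lambda k) = 2" "dim_col (Lambda k) = 2" by (simp_all add: Lambda_def)
  have d2: "d * 2 = 2 * d" by simp
  have Mc: "M \<in> carrier_mat (2*d) (2*d)" using assms(2,3) dims
    unfolding carrier_mat_def by (simp add: M_def kron_def d2)
  have Mi: "M $$ (p,q) = A$$(p div 2, q div 2) * (1\<^sub>m 2)$$(p mod 2, q mod 2) + B$$(p div 2, q div 2) * Lambda k $$(p mod 2, q mod 2)"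
    if "p < 2*d" "q < 2*d" for p q
    using that assms(2,3) dims by (simp add: M_def kron_def)
  have L: "Lambda k $$ (0,0) = 0" "Lambda k $$ (0,1) = 1" "Lambda k $$ (1,0) = w" "Lambda k $$ (1,1) = 0"
    by (simp_all add: Lambda_def w_def N_def)
  have MM: "adjoint_mat M * M = 1\<^sub>m (2*d)"
  proof (rule eq_matI)
    show "dim_row (adjoint_mat M * M) = dim_row (1\<^sub>m (2*d))" "dim_col (adjoint_mat M * M) = dim_col (1\<^sub>m (2*d))"
      using Mc by (simp_all add: adjoint_mat_def)
    fix p q assume "p < dim_row (1\<^sub>m (2*d))" "q < dim_col (1\<^sub>m (2*d))"
    then have pq: "p < 2*d" "q < 2*d" by auto
    define i where "i = p div 2"
    define r where "r = p mod 2"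
    define j where "j = q div 2"
    define s where "s = q mod 2"
    have ij: "i < d" "j < d" using pq by (auto simp: i_def j_def)
    have rs: "r < 2" "s < 2" by (auto simp: r_def s_def)
    have pe: "p = 2*i + r" "q = 2*j + s" by (auto simp: i_def r_def j_def s_def)
    have "(adjoint_mat M * M) $$ (p,q) = (\<Sum>t\<in>{0..<2*d}. cnj (M $$ (t,p)) * M $$ (t,q))"
      by (rule adj_mult_index[OF Mc Mc pq])
    also have "\<dots> = (\<Sum>l\<in>{0..<d}. cnj (M $$ (2*l,p)) * M $$ (2*l,q) + cnj (M $$ (2*l+1,p)) * M $$ (2*l+1,q))"
      by (rule sum2)
    also have "\<dots> = (\<Sum>l\<in>{0..<d}.
        cnj (A$$(l,i) * (1\<^sub>m 2)$$(0,r) + B$$(l,i) * Lambda k $$(0,r)) * (A$$(l,j) * (1\<^sub>m 2)$$(0,s) + B$$(l,j) * Lambda k $$(0,s))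
      + cnj (A$$(l,i) * (1\<^sub>m 2)$$(1,r) + B$$(l,i) * Lambda k $$(1,r)) * (A$$(l,j) * (1\<^sub>m 2)$$(1,s) + B$$(l,j) * Lambda k $$(1,s)))"
    proof (intro sum.cong refl)
      fix l assume "l \<in> {0..<d}"
      then have l: "2*l < 2*d" "2*l+1 < 2*d" by auto
      show "cnj (M $$ (2*l,p)) * M $$ (2*l,q) + cnj (M $$ (2*l+1,p)) * M $$ (2*l+1,q) =
        cnj (A$$(l,i) * (1\<^sub>m 2)$$(0,r) + B$$(l,i) * Lambda k $$(0,r)) * (A$$(l,j) * (1\<^sub>m 2)$$(0,s) + B$$(l,j) * Lambda k $$(0,s))
      + cnj (A$$(l,i) * (1\<^sub>m 2)$$(1,r) + B$$(l,i) * Lambda k $$(1,r)) * (A$$(l,j) * (1\<^sub>m 2)$$(1,s) + B$$(l,j) * Lambda k $$(1,s))"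
        using Mi[OF l(1) pq(1)] Mi[OF l(1) pq(2)] Mi[OF l(2) pq(1)] Mi[OF l(2) pq(2)]
        by (simp add: i_def r_def j_def s_def)
    qed
    also have "\<dots> = 1\<^sub>m (2*d) $$ (p,q)"
    proof -
      have r01: "r = 0 \<or> r = 1" and s01: "s = 0 \<or> s = 1" using rs by auto
      have pqeq: "(p = q) = (i = j \<and> r = s)" using pe rs by presburger
      show ?thesis
      proof (cases "r = 0")
        case r0: True
        show ?thesis
        proof (cases "s = 0")
          case True
          have "(\<Sum>l\<in>{0..<d}. cnj (A$$(l,i) * 1 + B$$(l,i) * 0) * (A$$(l,j) * 1 + B$$(l,j) * 0)
              + cnj (A$$(l,i) * 0 + B$$(l,i) * w) * (A$$(l,j) * 0 + B$$(l,j) * w)) = P i j"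
            unfolding P_def by (intro sum.cong refl) (simp add: algebra_simps wc wc')
          then show ?thesis using r0 True L PQ[OF ij] pq pqeq by simp
        next
          case False
          then have s1: "s = 1" using s01 by simp
          have "(\<Sum>l\<in>{0..<d}. cnj (A$$(l,i) * 1 + B$$(l,i) * 0) * (A$$(l,j) * 0 + B$$(l,j) * 1)
              + cnj (A$$(l,i) * 0 + B$$(l,i) * w) * (A$$(l,j) * 1 + B$$(l,j) * 0)) = Q i j"
            unfolding Q_def by (intro sum.cong refl) (simp add: algebra_simps)
          then show ?thesis using r0 s1 L PQ[OF ij] pq pqeq by simp
        qed
      next
        case False
        then have r1: "r = 1" using r01 by simp
        show ?thesis
        proof (cases "s = 0")
          case True
          have "(\<Sum>l\<in>{0..<d}. cnj (A$$(l,i) * 0 + B$$(l,i) * 1) * (A$$(l,j) * 1 + B$$(l,j) * 0)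
              + cnj (A$$(l,i) * 1 + B$$(l,i) * 0) * (A$$(l,j) * 0 + B$$(l,j) * w)) = w * Q i j"
            unfolding Q_def sum_distrib_left
          proof (intro sum.cong refl)
            fix l
            have "w * (cnj (A$$(l,i)) * B$$(l,j) + cnj w * (cnj (B$$(l,i)) * A$$(l,j)))
                = w * cnj (A$$(l,i)) * B$$(l,j) + (cnj w * w) * (cnj (B$$(l,i)) * A$$(l,j))"
              by (simp add: algebra_simps)
            then show "cnj (A$$(l,i) * 0 + B$$(l,i) * 1) * (A$$(l,j) * 1 + B$$(l,j) * 0)
              + cnj (A$$(l,i) * 1 + B$$(l,i) * 0) * (A$$(l,j) * 0 + B$$(l,j) * w) =
              w * (cnj (A$$(l,i)) * B$$(l,j) + cnj w * (cnj (B$$(l,i)) * A$$(l,j)))"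
              using wc by (simp add: algebra_simps)
          qed
          then show ?thesis using r1 True L PQ[OF ij] pq pqeq by simp
        next
          case False
          then have s1: "s = 1" using s01 by simp
          have "(\<Sum>l\<in>{0..<d}. cnj (A$$(l,i) * 0 + B$$(l,i) * 1) * (A$$(l,j) * 0 + B$$(l,j) * 1)
              + cnj (A$$(l,i) * 1 + B$$(l,i) * 0) * (A$$(l,j) * 1 + B$$(l,j) * 0)) = P i j"
            unfolding P_def by (intro sum.cong refl) (simp add: algebra_simps)
          then show ?thesis using r1 s1 L PQ[OF ij] pq pqeq by simp
        qed
      qed
    qed
    finally show "(adjoint_mat M * M) $$ (p,q) = 1\<^sub>m (2*d) $$ (p,q)" .
  qed
  have adjc: "adjoint_mat M \<in> carrier_mat (2*d) (2*d)" using Mc by (simp add: adjoint_mat_def)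
  have MM2: "M * adjoint_mat M = 1\<^sub>m (2*d)"
    by (rule mat_mult_left_right_inverse[OF adjc Mc MM])
  have unit: "unitary_mat M" unfolding unitary_mat_def using Mc MM MM2 by blast
  have R0: "0 \<in> Zhalf_zeta (2^(k-1))"
    using Zhalf_zeta.add[OF Zhalf_zeta.one Zhalf_zeta.neg[OF Zhalf_zeta.one]] by simp
  have ent: "entries_in M (Zhalf_zeta (2 ^ (k - 1)))"
    unfolding entries_in_def
  proof (intro allI impI)
    fix p q assume "p < dim_row M" "q < dim_col M"
    then have pq: "p < 2*d" "q < 2*d" using Mc by auto
    have a: "A$$(p div 2, q div 2) \<in> Zhalf_zeta (2^(k-1))" "B$$(p div 2, q div 2) \<in> Zhalf_zeta (2^(k-1))"
      using assms(2,3,4,5) pq unfolding entries_in_def by auto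
    have "p mod 2 < 2" "q mod 2 < 2" by auto
    then have i: "(1\<^sub>m 2)$$(p mod 2, q mod 2) \<in> Zhalf_zeta (2^(k-1))"
      using R0 Zhalf_zeta.one by auto
    have lam: "Lambda k $$(p mod 2, q mod 2) \<in> Zhalf_zeta (2^(k-1))"
      unfolding Lambda_def using R0 Zhalf_zeta.one Zhalf_zeta.root by auto
    show "M $$ (p,q) \<in> Zhalf_zeta (2^(k-1))"
      unfolding Mi[OF pq] by (intro Zhalf_zeta.add Zhalf_zeta.mult a i lam)
  qed
  show ?thesis using unit ent unfolding M_def by blast
qed

end
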